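(* The following hold: (1) $F$ is of class $C^1$ on $(1,+\infty)$ and $F'<0$ on $(1,+\infty)$; (2) $\lim_{E\to+\infty}F(E)=-\infty$; (3) $\lim_{E\to1^+}F(E)=+\infty$ and $\lim_{E\to1^-}F(E)=+\infty$; (4) $F$ has a unique zero $E_c$ in $(1,+\infty)$, and $F'(E_c)<0$; (5) $F(E)>0$ for all $E\in(0,1)$.
   Context: For $E\in(0,1)\cup(1,+\infty)$, let $$F(E)=\int_{\sqrt{(2-2\sqrt E)_+}}^{\sqrt{2+2\sqrt E}}\frac{2-x^2}{\sqrt{E-(x^2/2-1)^2}}\,dx,$$ where $(z)_+=\max\{z,0\}$. *)

theory Defs
  imports "HOL-Analysis.Analysis"
begin

text \<open>The (improper, but absolutely convergent) integral F(E), taken as a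
Henstock-Kurzweil integral over the closed interval. Division by zero at the
endpoints yields 0 in HOL, which is irrelevant (null set).\<close>

definition F :: "real \<Rightarrow> real" where
  "F E = integral {sqrt (max (2 - 2 * sqrt E) 0) .. sqrt (2 + 2 * sqrt E)}
           (\<lambda>x. (2 - x\<^sup>2) / sqrt (E - (x\<^sup>2 / 2 - 1)\<^sup>2))"

end

theory Submission
  imports Defs "HOL-Real_Asymp.Real_Asymp"
begin

definition kk :: "real \<Rightarrow> real \<Rightarrow> real" where
  "kk s t = sqrt 2 * (2 - 2*(s+1)*(sin t)^2) / sqrt (s - 1 + (s+1)*(sin t)^2)"

definition G :: "real \<Rightarrow> real" where "G s = integral {0..pi/2} (kk s)"

lemma kk_den_pos: "(s::real) > 1 \<Longrightarrow> s - 1 + (s+1)*(sin t)^2 > 0"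
proof -
  assume "s > 1"
  moreover have "(s+1)*(sin t)^2 \<ge> 0"
  proof -
    have "0 \<le> s+1" using \<open>s > 1\<close> by simp
    then show ?thesis by simp
  qed
  ultimately show ?thesis by linarith
qed

lemma cont_kk: assumes "s > 1" shows "continuous_on A (kk s)"
proof -
  have "\<And>t. s - 1 + (s+1)*(sin t)^2 \<noteq> 0" using kk_den_pos[OF assms] by (metis less_irrefl)
  then show ?thesis unfolding kk_def by (intro continuous_intros) auto
qed

lemma alg1:
  assumes s: "s > 1" and x: "0 \<le> x" "x < sqrt (2+2* s)"
  shows "inverse (sqrt (1 - (x / sqrt (2+2* s))^2)) * (1 / sqrt (2+2* s)) * kk s (arcsin (x / sqrt (2+2* s)))
       = (2 - x^2) / sqrt (s^2 - (x^2/2-1)^2)"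
proof -
  define c where "c = sqrt (2+2* s)"
  have c: "c > 0" "c^2 = 2+2 * s" using s by (auto simp: c_def)
  have xc: "0 \<le> x / c" "x / c < 1" using x c by (auto simp: c_def)
  have sn: "sin (arcsin (x / c)) = x / c" using xc by (intro sin_arcsin) auto
  have s1: "(s+1) * (sin (arcsin (x / c)))^2 = x^2/2"
    using c s by (simp add: sn power_divide field_simps)
  have x2: "x^2 < c^2" using x c by (intro power_strict_mono) (auto simp: c_def)
  define A where "A = 2+2 * s - x^2"
  define B where "B = s - 1 + x^2/2"
  have A: "A > 0" using x2 c by (simp add: A_def)
  have "x^2/2 \<ge> 0" by simp
  then have B: "B > 0" using s unfolding B_def by linarith
  have e1: "sqrt (1 - (x/c)^2) * c = sqrt A"
  proof -
    have "sqrt (1 - (x/c)^2) * c = sqrt ((1 - (x/c)^2) * c^2)"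
      using c(1) by (simp add: real_sqrt_mult)
    also have "(1 - (x/c)^2) * c^2 = A" using c s by (simp add: A_def power_divide field_simps)
    finally show ?thesis .
  qed
  have e2: "s^2 - (x^2/2-1)^2 = A * B / 2" by (simp add: A_def B_def power2_eq_square field_simps)
  have e3: "sqrt (A*B/2) = sqrt A * sqrt B / sqrt 2"
    by (simp add: real_sqrt_mult real_sqrt_divide)
  have kk1: "kk s (arcsin (x / c)) = sqrt 2 * (2 - x^2) / sqrt B"
    unfolding kk_def B_def mult.assoc s1 by (simp only: times_divide_eq_right nonzero_mult_div_cancel_left zero_neq_numeral[symmetric] not_False_eq_True)
  have "inverse (sqrt (1 - (x / c)^2)) * (1 / c) = 1 / sqrt A"
    unfolding e1[symmetric] by (simp add: inverse_mult_distrib divide_inverse)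
  then have "inverse (sqrt (1 - (x / c)^2)) * (1 / c) * kk s (arcsin (x / c)) = sqrt 2 * (2 - x^2) / (sqrt A * sqrt B)"
    using kk1 by simp
  also have "\<dots> = (2 - x^2) / sqrt (s^2 - (x^2/2-1)^2)"
    unfolding e2 e3 using A B by (simp add: field_simps)
  finally show ?thesis unfolding c_def .
qed


lemma F_eq_G:
  assumes E: "E > 1"
  shows "F E = G (sqrt E)"
proof -
  define s where "s = sqrt E"
  have s: "s > 1" using E by (simp add: s_def)
  define c where "c = sqrt (2 + 2 * s)"
  have c: "c > 0" using s by (simp add: c_def)
  have dom: "sqrt (max (2 - 2 * s) 0) = 0" using s by simp
  define g' where "g' x = inverse (sqrt (1 - (x / c)^2)) * (1 / c)" for x
  have sub: "((\<lambda>x. g' x *\<^sub>R kk s (arcsin (x / c))) has_integral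
      (integral {arcsin (0 / c)..arcsin (c / c)} (kk s) - integral {arcsin (c / c)..arcsin (0 / c)} (kk s))) {0..c}"
  proof (rule has_integral_substitution_general[where s="{c}" and c=0 and d="pi/2"])
    show "finite {c}" by simp
    show "0 \<le> c" using c by simp
    show "(\<lambda>x. arcsin (x / c)) ` {0..c} \<subseteq> {0..pi / 2}"
    proof
      fix y assume "y \<in> (\<lambda>x. arcsin (x / c)) ` {0..c}"
      then obtain x where x: "x \<in> {0..c}" "y = arcsin (x / c)" by auto
      have "0 \<le> x / c" "x / c \<le> 1" using x c by auto
      have "arcsin 0 \<le> arcsin (x/c)" by (rule arcsin_le_arcsin) (use \<open>0 \<le> x / c\<close> \<open>x / c \<le> 1\<close> in auto)
      moreover have "arcsin (x/c) \<le> arcsin 1" by (rule arcsin_le_arcsin) (use \<open>0 \<le> x / c\<close> \<open>x / c \<le> 1\<close> in auto)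
      ultimately show "y \<in> {0..pi/2}" using x by simp
    qed
    show "continuous_on {0..pi / 2} (kk s)" using cont_kk[OF s] .
    show "continuous_on {0..c} (\<lambda>x. arcsin (x / c))"
      using c by (intro continuous_on_arcsin continuous_intros) (auto intro: order_trans[of _ 0])
    fix x assume x: "x \<in> {0..c} - {c}"
    then have x1: "-1 < x / c" "x / c < 1" using c by (auto intro: less_le_trans[of _ 0])
    have "((\<lambda>x. arcsin (x / c)) has_real_derivative g' x) (at x)"
      unfolding g'_def
      by (rule DERIV_chain2[where g="\<lambda>x. x / c" and x=x, OF DERIV_arcsin[OF x1]]) (use c in \<open>auto intro!: derivative_eq_intros\<close>)
    then show "((\<lambda>x. arcsin (x / c)) has_real_derivative g' x) (at x within {0..c})"
      by (rule has_field_derivative_at_within)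
  qed
  have "integral {arcsin (0 / c)..arcsin (c / c)} (kk s) - integral {arcsin (c / c)..arcsin (0 / c)} (kk s)
      = G s" using c by (simp add: G_def)
  then have sub': "((\<lambda>x. g' x * kk s (arcsin (x / c))) has_integral G s) {0..c}"
    using sub by simp
  have "((\<lambda>x. (2 - x\<^sup>2) / sqrt (E - (x\<^sup>2 / 2 - 1)\<^sup>2)) has_integral G s) {0..c}"
  proof (rule has_integral_spike_finite[OF _ _ sub'])
    show "finite {c}" by simp
    fix x assume x: "x \<in> {0..c} - {c}"
    have "E = s^2" using E by (simp add: s_def)
    moreover have "0 \<le> x" "x < c" using x by auto
    ultimately show "(2 - x\<^sup>2) / sqrt (E - (x\<^sup>2 / 2 - 1)\<^sup>2) = g' x * kk s (arcsin (x / c))"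
      using alg1[OF s, of x] unfolding g'_def c_def by simp
  qed
  then show ?thesis unfolding F_def s_def[symmetric] dom c_def[symmetric]
    by (rule integral_unique)
qed


definition hh :: "real \<Rightarrow> real \<Rightarrow> real" where
  "hh s t = - sqrt 2 * s * sin t / sqrt (1 + s * sin t)"

definition H :: "real \<Rightarrow> real" where "H s = integral {-(pi/2)..pi/2} (hh s)"

lemma hh_den_pos: "(s::real) < 1 \<Longrightarrow> 0 \<le> s \<Longrightarrow> 1 + s * sin t > 0"
proof -
  assume s: "s < 1" "0 \<le> s"
  have "s * sin t \<ge> s * (-1)" using s by (intro mult_left_mono) auto
  then show ?thesis using s by linarith
qed

lemma cont_hh: assumes "s < 1" "0 \<le> s" shows "continuous_on A (hh s)"
proof -
  have "\<And>t. 1 + s * sin t \<noteq> 0" using hh_den_pos[OF assms] by (metis less_irrefl)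
  then show ?thesis unfolding hh_def by (intro continuous_intros) auto
qed

lemma alg2:
  assumes s: "0 < s" "s < 1" and x: "0 < x" and y: "-1 < (x^2/2 - 1) / s" "(x^2/2 - 1) / s < 1"
  shows "inverse (sqrt (1 - ((x^2/2 - 1) / s)^2)) * (x / s) * hh s (arcsin ((x^2/2 - 1) / s))
       = (2 - x^2) / sqrt (s^2 - (x^2/2-1)^2)"
proof -
  define y where "y = (x^2/2 - 1) / s"
  define u where "u = x^2/2 - 1"
  have sn: "sin (arcsin y) = y" using y unfolding y_def by (intro sin_arcsin) auto
  have sy: "s * sin (arcsin y) = u" unfolding sn using s by (simp add: y_def u_def)
  have sq: "sqrt (x^2/2) = x / sqrt 2" using x by (simp add: real_sqrt_divide)
  have hh1: "hh s (arcsin y) = (2 - x^2) / x"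
  proof -
    have "hh s (arcsin y) = - sqrt 2 * u / sqrt (1 + u)"
      unfolding hh_def mult.assoc[symmetric] sy[symmetric] by simp
    also have "1 + u = x^2/2" by (simp add: u_def)
    also have "- sqrt 2 * u / sqrt (x^2/2) = - 2 * u / x" unfolding sq using x by (simp add: field_simps)
    also have "- 2 * u = 2 - x^2" by (simp add: u_def)
    finally show ?thesis .
  qed
  have e1: "sqrt (1 - y^2) * s = sqrt (s^2 - u^2)"
  proof -
    have "sqrt (1 - y^2) * s = sqrt ((1 - y^2) * s^2)"
      using s by (simp add: real_sqrt_mult)
    also have "(1 - y^2) * s^2 = s^2 - u^2" using s by (simp add: y_def u_def power_divide field_simps)
    finally show ?thesis .
  qed
  have "inverse (sqrt (1 - y^2)) * (x / s) * hh s (arcsin y) = (2 - x^2) / (sqrt (1 - y^2) * s)"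
  proof -
    have "\<bar>y\<bar> < 1" using y unfolding y_def by auto
    then have "y^2 < 1" by (simp add: abs_square_less_1)
    then have "sqrt (1 - y^2) > 0" by simp
    then show ?thesis unfolding hh1 using x s by (simp add: field_simps)
  qed
  also note e1
  finally show ?thesis unfolding y_def u_def .
qed


lemma F_eq_H:
  assumes E: "0 < E" "E < 1"
  shows "F E = H (sqrt E)"
proof -
  define s where "s = sqrt E"
  have s: "0 < s" "s < 1" using E by (auto simp: s_def)
  define a where "a = sqrt (2 - 2 * s)"
  define b where "b = sqrt (2 + 2 * s)"
  have a: "a > 0" "a^2 = 2 - 2 * s" using s by (auto simp: a_def)
  have b: "b > 0" "b^2 = 2 + 2 * s" using s by (auto simp: b_def)
  have ab: "a \<le> b" unfolding a_def b_def using s by simp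
  have dom: "sqrt (max (2 - 2 * s) 0) = a" using s by (simp add: a_def)
  define g where "g x = arcsin ((x^2/2 - 1) / s)" for x
  define g' where "g' x = inverse (sqrt (1 - ((x^2/2 - 1) / s)^2)) * (x / s)" for x
  have yb: "-1 \<le> (x^2/2 - 1) / s \<and> (x^2/2 - 1) / s \<le> 1" if x: "x \<in> {a..b}" for x
  proof -
    have "a^2 \<le> x^2" by (rule power_mono) (use x a in auto)
    moreover have "x^2 \<le> b^2" by (rule power_mono) (use x a in auto)
    ultimately have "-s \<le> x^2/2 - 1" "x^2/2 - 1 \<le> s" using a b by auto
    then show ?thesis using s by (auto simp: field_simps)
  qed
  have yb': "-1 < (x^2/2 - 1) / s \<and> (x^2/2 - 1) / s < 1" if x: "x \<in> {a<..<b}" for x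
  proof -
    have "a^2 < x^2" by (rule power_strict_mono) (use x a in auto)
    moreover have "x^2 < b^2" by (rule power_strict_mono) (use x a in auto)
    ultimately have "-s < x^2/2 - 1" "x^2/2 - 1 < s" using a b by auto
    then show ?thesis using s by (auto simp: field_simps)
  qed
  have "((a^2/2 - 1) / s) = -1" using a s by (simp add: field_simps)
  then have ga: "g a = -(pi/2)" unfolding g_def by simp
  have "((b^2/2 - 1) / s) = 1" using b s by (simp add: field_simps)
  then have gb: "g b = pi/2" unfolding g_def by simp
  have sub: "((\<lambda>x. g' x *\<^sub>R hh s (g x)) has_integral
      (integral {g a..g b} (hh s) - integral {g b..g a} (hh s))) {a..b}"
  proof (rule has_integral_substitution_general[where s="{a,b}" and c="-(pi/2)" and d="pi/2"])
    show "finite {a,b}" by simp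
    show "a \<le> b" by (rule ab)
    show "g ` {a..b} \<subseteq> {-(pi/2)..pi / 2}"
    proof
      fix z assume "z \<in> g ` {a..b}"
      then obtain x where x: "x \<in> {a..b}" "z = g x" by auto
      show "z \<in> {-(pi/2)..pi/2}" using yb[OF x(1)] x(2) unfolding g_def
        using arcsin_lbound arcsin_ubound by auto
    qed
    show "continuous_on {-(pi/2)..pi / 2} (hh s)" using cont_hh s by auto
    show "continuous_on {a..b} g"
      unfolding g_def using yb s by (intro continuous_on_arcsin continuous_intros) auto
    fix x assume x: "x \<in> {a..b} - {a,b}"
    then have x': "x \<in> {a<..<b}" by auto
    note x1 = yb'[OF x', THEN conjunct1] yb'[OF x', THEN conjunct2]
    have "(g has_real_derivative g' x) (at x)"
      unfolding g'_def g_def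
      by (rule DERIV_chain2[where g="\<lambda>x. (x^2/2 - 1) / s" and x=x, OF DERIV_arcsin[OF x1]])
         (use s in \<open>auto intro!: derivative_eq_intros\<close>)
    then show "(g has_real_derivative g' x) (at x within {a..b})"
      by (rule has_field_derivative_at_within)
  qed
  then have sub': "((\<lambda>x. g' x * hh s (g x)) has_integral H s) {a..b}"
    unfolding ga gb H_def by simp
  have "((\<lambda>x. (2 - x\<^sup>2) / sqrt (E - (x\<^sup>2 / 2 - 1)\<^sup>2)) has_integral H s) {a..b}"
  proof (rule has_integral_spike_finite[OF _ _ sub'])
    show "finite {a,b}" by simp
    fix x assume x: "x \<in> {a..b} - {a,b}"
    then have x': "x \<in> {a<..<b}" by auto
    have "E = s^2" using E by (simp add: s_def)
    moreover have "0 < x" using x' a by auto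
    ultimately show "(2 - x\<^sup>2) / sqrt (E - (x\<^sup>2 / 2 - 1)\<^sup>2) = g' x * hh s (g x)"
      using alg2[OF s, of x] yb'[OF x'] unfolding g'_def g_def by simp
  qed
  then show ?thesis unfolding F_def s_def[symmetric] dom b_def[symmetric]
    by (rule integral_unique)
qed

definition dk :: "real \<Rightarrow> real \<Rightarrow> real" where
  "dk s t = - sqrt 2 * (s * (sin t)^2 * (1 + (sin t)^2) + (1 - (sin t)^2)^2)
     / ((s - 1 + (s+1)*(sin t)^2) * sqrt (s - 1 + (s+1)*(sin t)^2))"

lemma dk_alg: fixes r w S s :: real assumes w: "w > 0" and D: "w^2 = s - 1 + (s+1)*S"
 shows "(r*(-2*S)*w - r*(2-2*(s+1)*S)*((1+S)/(2*w)))/w^2 = -r*(s*S*(1+S)+(1-S)^2)/(w^2*w)"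
proof -
  have aux: "r*(-2*X)/(2*Y) = -r*X/Y" if "Y \<noteq> 0" for X Y :: real
    using that by (simp add: field_simps)
  have "(r*(-2*S)*w - r*(2-2*(s+1)*S)*((1+S)/(2*w)))/w^2 = r*((-4*S)*w^2 - (2-2*(s+1)*S)*(1+S))/(2*(w^2*w))"
    using w by (simp add: field_simps power2_eq_square)
  also have "(-4*S)*w^2 - (2-2*(s+1)*S)*(1+S) = -2*(s*S*(1+S)+(1-S)^2)" unfolding D by (simp add: algebra_simps power2_eq_square)
  also have "r*(-2*(s*S*(1+S)+(1-S)^2))/(2*(w^2*w)) = -r*(s*S*(1+S)+(1-S)^2)/(w^2*w)"
    by (rule aux) (use w in simp)
  finally show ?thesis .
qed

lemma kk_deriv: assumes s: "s > 1" shows "((\<lambda>s. kk s t) has_real_derivative dk s t) (at s)"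
proof -
  define S where "S = (sin t)^2"
  define D where "D = s - 1 + (s+1)*S"
  have D: "D > 0" unfolding D_def S_def by (rule kk_den_pos[OF s])
  have "((\<lambda>s. sqrt 2 * (2 - 2*(s+1)*S) / sqrt (s - 1 + (s+1)*S)) has_real_derivative
      (sqrt 2 * (- 2 * S) * sqrt D - sqrt 2 * (2 - 2*(s+1)*S) * ((1 + S) / (2 * sqrt D))) / (sqrt D)^2) (at s)"
    using D unfolding D_def
    by (auto intro!: derivative_eq_intros simp: power2_eq_square) (simp add: field_simps)
  moreover have "(sqrt 2 * (- 2 * S) * sqrt D - sqrt 2 * (2 - 2*(s+1)*S) * ((1 + S) / (2 * sqrt D))) / (sqrt D)^2
     = dk s t"
  proof -
    have w: "sqrt D > 0" "(sqrt D)^2 = s - 1 + (s+1)*S" using D by (auto simp: D_def)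
    show ?thesis unfolding dk_alg[OF w] dk_def S_def[symmetric] D_def[symmetric] using D by simp
  qed
  ultimately show ?thesis unfolding kk_def S_def[symmetric] by simp
qed

lemma integral_pos_cont:
  fixes f :: "real \<Rightarrow> real"
  assumes ab: "a < b" and cont: "continuous_on {a..b} f" and nn: "\<And>x. x \<in> {a..b} \<Longrightarrow> 0 \<le> f x"
    and x0: "x0 \<in> {a..b}" "f x0 > 0"
  shows "integral {a..b} f > 0"
proof -
  have int: "f integrable_on {a..b}" using integrable_continuous_interval cont by blast
  have ge: "integral {a..b} f \<ge> 0" by (rule integral_nonneg[OF int nn])
  show ?thesis
  proof (rule ccontr)
    assume "\<not> ?thesis"
    then have "integral {a..b} f = 0" using ge by simp
    then have hi: "(f has_integral 0) (cbox a b)" using int by (metis cbox_interval has_integral_integral)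
    have "f x0 = 0"
      by (rule has_integral_0_cbox_imp_0[of a b f x0]) (use hi cont nn x0 ab in \<open>auto simp: cbox_interval\<close>)
    then show False using x0 by simp
  qed
qed

lemma integral_neg_cont:
  fixes f :: "real \<Rightarrow> real"
  assumes ab: "a < b" and cont: "continuous_on {a..b} f" and neg: "\<And>x. x \<in> {a..b} \<Longrightarrow> f x < 0"
  shows "integral {a..b} f < 0"
proof -
  have "integral {a..b} (\<lambda>x. - f x) > 0"
    by (rule integral_pos_cont[OF ab _ _ _, of _ a]) (use cont neg ab in \<open>auto intro!: continuous_intros simp: less_imp_le\<close>)
  then show ?thesis by simp
qed

lemma cont_dk: "continuous_on ({1<..} \<times> A) (\<lambda>(s,t). dk s t)"
proof -
  have eq: "(\<lambda>(s,t). dk s t) = (\<lambda>p. dk (fst p) (snd p))" by auto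
  have "\<And>p. p \<in> {1<..} \<times> A \<Longrightarrow> fst p - 1 + (fst p + 1) * (sin (snd p))^2 > 0"
    by (rule kk_den_pos) auto
  then show ?thesis unfolding eq unfolding dk_def
    by (intro continuous_intros) (auto, metis kk_den_pos less_irrefl)
qed

lemma dk_neg: assumes s: "s > 1" shows "dk s t < 0"
proof -
  define S where "S = (sin t)^2"
  have D: "s - 1 + (s+1)*S > 0" unfolding S_def by (rule kk_den_pos[OF s])
  have S0: "S \<ge> 0" unfolding S_def by simp
  have "s * S * (1 + S) \<ge> 0" using s S0 by simp
  moreover have "(1 - S)^2 > 0 \<or> S > 0" using S0 by (cases "S = 0") auto
  moreover have "S > 0 \<Longrightarrow> s * S * (1 + S) > 0" using s by simp
  ultimately have N: "s * S * (1 + S) + (1 - S)^2 > 0"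
    by (metis add_nonneg_pos add_pos_nonneg zero_le_power2)
  show ?thesis unfolding dk_def S_def[symmetric] using D N by (simp add: divide_neg_pos)
qed

lemma cont_dk1: assumes "s > 1" shows "continuous_on A (dk s)"
proof -
  have "\<And>t. s - 1 + (s+1)*(sin t)^2 > 0" using kk_den_pos[OF assms] by blast
  then show ?thesis unfolding dk_def
    by (intro continuous_intros) (auto simp: less_imp_le dest: less_imp_neq[THEN not_sym])
qed

definition dG :: "real \<Rightarrow> real" where "dG s = integral {0..pi/2} (dk s)"

lemma G_deriv: assumes s: "s > 1" shows "(G has_real_derivative dG s) (at s)"
proof -
  have "((\<lambda>s. integral (cbox 0 (pi/2)) (kk s)) has_real_derivative integral (cbox 0 (pi/2)) (dk s)) (at s within {1<..})"
  proof (rule leibniz_rule_field_derivative)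
    fix x t :: real assume "x \<in> {1<..}" "t \<in> cbox 0 (pi/2)"
    then show "((\<lambda>x. kk x t) has_real_derivative dk x t) (at x within {1<..})"
      using kk_deriv by (auto intro: has_field_derivative_at_within)
  next
    fix x :: real assume "x \<in> {1<..}"
    then show "kk x integrable_on cbox 0 (pi/2)"
      using cont_kk[of x "{0..pi/2}"] by (simp add: cbox_interval integrable_continuous_interval)
  next
    show "continuous_on ({1<..} \<times> cbox 0 (pi / 2)) (\<lambda>(x, t). dk x t)" by (rule cont_dk)
  qed (use s in auto)
  then show ?thesis unfolding G_def dG_def cbox_interval
    using at_within_open[of s "{1<..}"] s by simp
qed

lemma dG_cont: "continuous_on {1<..} dG"
  unfolding dG_def using integral_continuous_on_param[OF cont_dk[of "cbox 0 (pi/2)"]]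
  by (simp add: cbox_interval)

lemma dG_neg: "s > 1 \<Longrightarrow> dG s < 0"
  unfolding dG_def
  by (rule integral_neg_cont) (auto intro!: dk_neg cont_dk1)


lemma kk_upper: assumes s: "s \<ge> 2" shows "kk s t \<le> 2 * sqrt 2 - 2 * sqrt s * (sin t)^2"
proof -
  define S where "S = (sin t)^2"
  define D where "D = s - 1 + (s+1)*S"
  have S: "0 \<le> S" "S \<le> 1" unfolding S_def by (auto simp: abs_square_le_1)
  have "(s+1)*S \<ge> 0" using S s by simp
  then have D1: "D \<ge> 1" using s unfolding D_def by linarith
  have "(s+1)*S \<le> (s+1)" using mult_left_mono[of S 1 "s+1"] S s by simp
  then have D2: "D \<le> 2 * s" unfolding D_def by linarith
  have sD1: "sqrt D \<ge> 1" using D1 by simp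
  have sD2: "sqrt D \<le> sqrt 2 * sqrt s" using D2 by (simp add: real_sqrt_mult[symmetric])
  have sDp: "sqrt D > 0" using sD1 by linarith
  have t1: "2 * sqrt 2 / sqrt D \<le> 2 * sqrt 2" using sD1 sDp by (simp add: divide_le_eq)
  have ss: "sqrt s * sqrt s = s" using s by simp
  have "2 * sqrt s * S * sqrt D \<le> 2 * sqrt s * S * (sqrt 2 * sqrt s)"
    using sD2 S s by (intro mult_left_mono) auto
  also have "\<dots> = 2 * sqrt 2 * s * S" using ss by (simp add: algebra_simps)
  also have "\<dots> \<le> 2 * sqrt 2 * (s+1) * S" using S by (simp add: mult_left_mono mult_right_mono)
  finally have t2: "2 * sqrt s * S \<le> 2 * sqrt 2 * (s+1) * S / sqrt D" using sDp by (simp add: le_divide_eq)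
  have "kk s t = 2 * sqrt 2 / sqrt D - 2 * sqrt 2 * (s+1) * S / sqrt D"
    unfolding kk_def S_def[symmetric] D_def[symmetric] by (simp add: diff_divide_distrib algebra_simps)
  then show ?thesis using t1 t2 unfolding S_def by linarith
qed

definition I2 :: real where "I2 = integral {0..pi/2} (\<lambda>t. (sin t)^2)"

lemma I2_pos: "I2 > 0"
  unfolding I2_def
  by (rule integral_pos_cont[of 0 "pi/2" _ "pi/2"]) (auto intro!: continuous_intros)

lemma G_upper: assumes s: "s \<ge> 2" shows "G s \<le> sqrt 2 * pi - 2 * sqrt s * I2"
proof -
  have i1: "((\<lambda>t. (sin t)^2) has_integral I2) {0..pi/2}" unfolding I2_def
    by (intro integrable_integral integrable_continuous_interval continuous_intros)
  have i2: "((\<lambda>t. 2 * sqrt 2 - 2 * sqrt s * (sin t)^2) has_integral (2 * sqrt 2 * (pi/2) - 2 * sqrt s * I2)) {0..pi/2}"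
    using has_integral_diff[OF has_integral_const_real[of "2 * sqrt 2" 0 "pi/2"] has_integral_mult_right[OF i1, of "2 * sqrt s"]]
    by (simp add: mult.commute)
  have i3: "(kk s has_integral G s) {0..pi/2}" unfolding G_def using s
    by (intro integrable_integral integrable_continuous_interval cont_kk) auto
  have "G s \<le> 2 * sqrt 2 * (pi/2) - 2 * sqrt s * I2"
    by (rule has_integral_le[OF i3 i2]) (use kk_upper s in auto)
  then show ?thesis by simp
qed


lemma sin_sq_le: "(sin (t::real))^2 \<le> t^2"
proof -
  have "\<bar>sin t\<bar>^2 \<le> \<bar>t\<bar>^2" by (rule power_mono[OF abs_sin_x_le_abs_x]) simp
  then show ?thesis by simp
qed

lemma kk_lower: assumes s: "1 < s" "s \<le> 2" and t: "0 \<le> t"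
  shows "kk s t \<ge> 2 * sqrt 2 / (sqrt (s - 1) + 2 * t) - 2 * sqrt 6"
proof -
  define S where "S = (sin t)^2"
  define T where "T = (s+1)*S"
  define D where "D = s - 1 + T"
  have S: "0 \<le> S" "S \<le> 1" unfolding S_def by (auto simp: abs_square_le_1)
  have T0: "T \<ge> 0" using S s unfolding T_def by simp
  have T3: "T \<le> 3" using mult_mono[of "s+1" 3 S 1] S s unfolding T_def by simp
  have D: "D > 0" unfolding D_def T_def S_def by (rule kk_den_pos[OF s(1)])
  have sDp: "sqrt D > 0" using D by simp
  have "sqrt T \<le> sqrt D" by (rule real_sqrt_le_mono) (use s in \<open>simp add: D_def\<close>)
  then have "sqrt T * sqrt T \<le> sqrt T * sqrt D" by (intro mult_left_mono) (auto simp: T0)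
  moreover have "sqrt T * sqrt T = T" using T0 by simp
  ultimately have "T \<le> sqrt T * sqrt D" by simp
  then have "T / sqrt D \<le> sqrt T" using sDp by (simp add: divide_le_eq)
  also have "sqrt T \<le> sqrt 3" using T3 by simp
  finally have "2 * sqrt 2 * (T / sqrt D) \<le> 2 * sqrt 2 * sqrt 3" by (intro mult_left_mono) auto
  also have "2 * sqrt 2 * sqrt 3 = 2 * sqrt 6" by (simp add: real_sqrt_mult[symmetric])
  finally have t1: "2 * sqrt 2 * T / sqrt D \<le> 2 * sqrt 6" by simp
  have "T \<le> 3 * t^2" using mult_mono[of "s+1" 3 S "t^2"] S s sin_sq_le[of t] unfolding T_def S_def by simp
  also have "\<dots> \<le> (2 * t)^2" by (simp add: power2_eq_square)
  finally have "sqrt T \<le> 2 * t" using t by (metis real_le_lsqrt mult_nonneg_nonneg zero_le_numeral T0)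
  moreover have "sqrt D \<le> sqrt (s - 1) + sqrt T" unfolding D_def
    using s T0 by (intro sqrt_add_le_add_sqrt) auto
  ultimately have sD: "sqrt D \<le> sqrt (s - 1) + 2 * t" by linarith
  have t2: "2 * sqrt 2 / (sqrt (s - 1) + 2 * t) \<le> 2 * sqrt 2 / sqrt D"
  proof -
    have pos: "sqrt (s - 1) + 2 * t > 0" using sD sDp by linarith
    show ?thesis using sD sDp pos by (intro divide_left_mono mult_pos_pos) auto
  qed
  have "kk s t = 2 * sqrt 2 / sqrt D - 2 * sqrt 2 * T / sqrt D"
    unfolding kk_def S_def[symmetric] T_def D_def by (simp add: diff_divide_distrib algebra_simps)
  then show ?thesis using t1 t2 by linarith
qed

lemma int_recip:
  assumes e: "e > 0" and c: "c > 0" and ab: "a \<le> b" and ea: "e + c * (0::real) \<le> e"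
  shows "((\<lambda>t. c / (e + c * (t - a))) has_integral (ln (e + c * (b - a)) - ln e)) {a..b}"
proof -
  have "((\<lambda>t. c / (e + c * (t - a))) has_integral ((\<lambda>t. ln (e + c * (t - a))) b - (\<lambda>t. ln (e + c * (t - a))) a)) {a..b}"
  proof (rule fundamental_theorem_of_calculus[OF ab])
    fix x assume x: "x \<in> {a..b}"
    then have pos: "e + c * (x - a) > 0" using e c by (simp add: add_pos_nonneg)
    have "((\<lambda>t. ln (e + c * (t - a))) has_real_derivative (1 / (e + c * (x - a))) * c) (at x)"
      using pos by (auto intro!: derivative_eq_intros)
    then show "((\<lambda>t. ln (e + c * (t - a))) has_vector_derivative c / (e + c * (x - a))) (at x within {a..b})"
      by (simp add: has_real_derivative_iff_has_vector_derivative[symmetric] has_field_derivative_at_within)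
  qed
  then show ?thesis by simp
qed

lemma G_lower: assumes s: "1 < s" "s \<le> 2"
  shows "G s \<ge> sqrt 2 * (ln pi - ln (sqrt (s - 1))) - sqrt 6 * pi"
proof -
  define e where "e = sqrt (s - 1)"
  have e: "e > 0" using s by (simp add: e_def)
  have i1: "((\<lambda>t. 2 / (e + 2 * (t - 0))) has_integral (ln (e + 2 * (pi/2 - 0)) - ln e)) {0..pi/2}"
    by (rule int_recip) (use e in auto)
  have i2: "((\<lambda>t. 2 * sqrt 2 / (e + 2 * t) - 2 * sqrt 6) has_integral
       (sqrt 2 * (ln (e + pi) - ln e) - 2 * sqrt 6 * (pi/2))) {0..pi/2}"
    using has_integral_diff[OF has_integral_mult_right[OF i1, of "sqrt 2"] has_integral_const_real[of "2 * sqrt 6" 0 "pi/2"]]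
    by (simp add: mult.commute)
  have i3: "(kk s has_integral G s) {0..pi/2}" unfolding G_def using s
    by (intro integrable_integral integrable_continuous_interval cont_kk) auto
  have A: "sqrt 2 * (ln (e + pi) - ln e) - 2 * sqrt 6 * (pi/2) \<le> G s"
    by (rule has_integral_le[OF i2 i3]) (use kk_lower s in \<open>auto simp: e_def\<close>)
  have A': "sqrt 2 * ln (e + pi) - sqrt 2 * ln e - sqrt 6 * pi \<le> G s"
    using A by (simp add: right_diff_distrib)
  have "ln pi \<le> ln (e + pi)" by (subst ln_le_cancel_iff) (use e pi_gt_zero in \<open>auto intro: add_pos_pos\<close>)
  then have B: "sqrt 2 * ln pi \<le> sqrt 2 * ln (e + pi)" by (intro mult_left_mono) auto
  show ?thesis unfolding e_def[symmetric] right_diff_distrib using A' B by linarith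
qed


lemma one_plus_sin_le: assumes "0 \<le> \<theta> + pi/2" shows "1 + sin \<theta> \<le> (\<theta> + pi/2)^2 / 2"
proof -
  define \<psi> where "\<psi> = \<theta> + pi/2"
  have "cos \<psi> = - sin \<theta>" unfolding \<psi>_def by (simp add: cos_add)
  moreover have "cos \<psi> = 1 - 2 * (sin (\<psi>/2))^2" using cos_double_sin[of "\<psi>/2"] by simp
  moreover have "(sin (\<psi>/2))^2 \<le> (\<psi>/2)^2" by (rule sin_sq_le)
  ultimately have "1 + sin \<theta> \<le> 2 * (\<psi>/2)^2" by linarith
  then show ?thesis unfolding \<psi>_def by (simp add: power_divide)
qed

lemma hh_lower: assumes s: "0 < s" "s < 1" and t: "-(pi/2) \<le> t"
  shows "hh s t \<ge> sqrt 2 / (sqrt (1 - s) + (t + pi/2)) - 2"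
proof -
  define z where "z = 1 + s * sin t"
  have z: "z > 0" unfolding z_def using hh_den_pos s by simp
  have "s * sin t \<le> s" using mult_left_mono[of "sin t" 1 s] s by simp
  then have z2: "z \<le> 2" using s unfolding z_def by linarith
  have sz: "sqrt z > 0" using z by simp
  have "hh s t = sqrt 2 * (1 - z) / sqrt z" unfolding hh_def z_def by (simp add: algebra_simps)
  also have "\<dots> = sqrt 2 / sqrt z - sqrt 2 * sqrt z"
    using sz z by (simp add: field_simps)
  finally have e: "hh s t = sqrt 2 / sqrt z - sqrt 2 * sqrt z" .
  have "sqrt 2 * sqrt z \<le> sqrt 2 * sqrt 2" using z2 by (intro mult_left_mono) auto
  then have b1: "sqrt 2 * sqrt z \<le> 2" by simp
  have ps: "0 \<le> t + pi/2" using t by simp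
  have "1 + sin t \<ge> 0" using sin_ge_minus_one[of t] by linarith
  then have "s * (1 + sin t) \<le> 1 * (1 + sin t)" using s by (intro mult_right_mono) auto
  also have "\<dots> \<le> (t + pi/2)^2 / 2" using one_plus_sin_le[OF ps] by simp
  also have "\<dots> \<le> (t + pi/2)^2" by simp
  finally have "z \<le> (1 - s) + (t + pi/2)^2" unfolding z_def by (simp add: algebra_simps)
  then have "sqrt z \<le> sqrt ((1 - s) + (t + pi/2)^2)" by simp
  also have "\<dots> \<le> sqrt (1 - s) + sqrt ((t + pi/2)^2)" using s by (intro sqrt_add_le_add_sqrt) auto
  also have "sqrt ((t + pi/2)^2) = t + pi/2" using ps by simp
  finally have b2: "sqrt z \<le> sqrt (1 - s) + (t + pi/2)" .
  have "sqrt 2 / (sqrt (1 - s) + (t + pi/2)) \<le> sqrt 2 / sqrt z"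
  proof -
    have pos: "sqrt (1 - s) + (t + pi/2) > 0" using b2 sz by linarith
    show ?thesis using b2 sz pos by (intro divide_left_mono mult_pos_pos) auto
  qed
  then show ?thesis using e b1 by linarith
qed

lemma H_lower: assumes s: "0 < s" "s < 1"
  shows "H s \<ge> sqrt 2 * (ln pi - ln (sqrt (1 - s))) - 2 * pi"
proof -
  define e where "e = sqrt (1 - s)"
  have e: "e > 0" using s by (simp add: e_def)
  have i1: "((\<lambda>t. 1 / (e + 1 * (t - (-(pi/2))))) has_integral (ln (e + 1 * (pi/2 - (-(pi/2)))) - ln e)) {-(pi/2)..pi/2}"
    by (rule int_recip) (use e in auto)
  have i2: "((\<lambda>t. sqrt 2 / (e + (t + pi/2)) - 2) has_integral
       (sqrt 2 * (ln (e + pi) - ln e) - 2 * pi)) {-(pi/2)..pi/2}"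
    using has_integral_diff[OF has_integral_mult_right[OF i1, of "sqrt 2"] has_integral_const_real[of 2 "-(pi/2)" "pi/2"]]
    by (simp add: mult.commute add.commute add.left_commute)
  have i3: "(hh s has_integral H s) {-(pi/2)..pi/2}" unfolding H_def using s
    by (intro integrable_integral integrable_continuous_interval cont_hh) auto
  have A: "sqrt 2 * (ln (e + pi) - ln e) - 2 * pi \<le> H s"
    by (rule has_integral_le[OF i2 i3]) (use hh_lower s in \<open>auto simp: e_def\<close>)
  have A': "sqrt 2 * ln (e + pi) - sqrt 2 * ln e - 2 * pi \<le> H s"
    using A by (simp add: right_diff_distrib)
  have "ln pi \<le> ln (e + pi)" by (subst ln_le_cancel_iff) (use e pi_gt_zero in \<open>auto intro: add_pos_pos\<close>)
  then have B: "sqrt 2 * ln pi \<le> sqrt 2 * ln (e + pi)" by (intro mult_left_mono) auto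
  show ?thesis unfolding e_def[symmetric] right_diff_distrib using A' B by linarith
qed


definition PP :: "real \<Rightarrow> real \<Rightarrow> real" where
  "PP s t = sqrt 2 * s * cos t / sqrt (1 + s * sin t)"
definition qq :: "real \<Rightarrow> real \<Rightarrow> real" where
  "qq s t = sqrt 2 / 2 * s^2 * (cos t)^2 / ((1 + s * sin t) * sqrt (1 + s * sin t))"

lemma PP_alg: fixes r w s si co :: real assumes w: "w > 0"
  shows "(r * s * (- si) * w - r * s * co * ((s * co) / (2 * w))) / w^2
     = - r * s * si / w - r / 2 * s^2 * co^2 / (w^2 * w)"
  using w by (simp add: field_simps power2_eq_square)

lemma PP_deriv: assumes s: "0 < s" "s < 1"
  shows "((PP s) has_real_derivative (hh s t - qq s t)) (at t)"
proof -
  define z where "z = 1 + s * sin t"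
  have z: "z > 0" unfolding z_def using hh_den_pos s by simp
  have "((\<lambda>t. sqrt 2 * s * cos t / sqrt (1 + s * sin t)) has_real_derivative
     (sqrt 2 * s * (- sin t) * sqrt z - sqrt 2 * s * cos t * ((s * cos t) / (2 * sqrt z))) / (sqrt z)^2) (at t)"
    using z unfolding z_def
    by (auto intro!: derivative_eq_intros simp: power2_eq_square) (simp add: field_simps)
  also have "(sqrt 2 * s * (- sin t) * sqrt z - sqrt 2 * s * cos t * ((s * cos t) / (2 * sqrt z))) / (sqrt z)^2
     = hh s t - qq s t"
    unfolding PP_alg[OF real_sqrt_gt_zero[OF z]] hh_def qq_def z_def[symmetric] using z by simp
  finally show ?thesis unfolding PP_def .
qed

lemma H_pos: assumes s: "0 < s" "s < 1" shows "H s > 0"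
proof -
  have "((\<lambda>t. hh s t - qq s t) has_integral (PP s (pi/2) - PP s (-(pi/2)))) {-(pi/2)..pi/2}"
  proof (rule fundamental_theorem_of_calculus)
    fix x assume "x \<in> {-(pi/2)..pi/2}"
    show "(PP s has_vector_derivative hh s x - qq s x) (at x within {-(pi/2)..pi/2})"
      using PP_deriv[OF s, of x]
      by (simp add: has_real_derivative_iff_has_vector_derivative[symmetric] has_field_derivative_at_within)
  qed simp
  then have i1: "((\<lambda>t. hh s t - qq s t) has_integral 0) {-(pi/2)..pi/2}"
    unfolding PP_def by simp
  have den: "\<And>t. 1 + s * sin t > 0" using hh_den_pos s by simp
  have cq: "continuous_on {-(pi/2)..pi/2} (qq s)"
    unfolding qq_def using den by (intro continuous_intros) (auto dest: less_imp_neq[THEN not_sym])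
  have qpos: "integral {-(pi/2)..pi/2} (qq s) > 0"
  proof (rule integral_pos_cont[OF _ cq, of 0])
    fix x show "0 \<le> qq s x" unfolding qq_def using den[of x] s by (auto intro!: divide_nonneg_pos mult_nonneg_nonneg mult_pos_pos)
  qed (use s in \<open>auto simp: qq_def\<close>)
  have i2: "(qq s has_integral integral {-(pi/2)..pi/2} (qq s)) {-(pi/2)..pi/2}"
    using cq by (intro integrable_integral integrable_continuous_interval)
  have "((\<lambda>t. (hh s t - qq s t) + qq s t) has_integral (0 + integral {-(pi/2)..pi/2} (qq s))) {-(pi/2)..pi/2}"
    by (rule has_integral_add[OF i1 i2])
  then have "(hh s has_integral integral {-(pi/2)..pi/2} (qq s)) {-(pi/2)..pi/2}" by simp
  then have "H s = integral {-(pi/2)..pi/2} (qq s)" unfolding H_def by (rule integral_unique)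
  then show ?thesis using qpos by simp
qed


definition dF :: "real \<Rightarrow> real" where "dF E = dG (sqrt E) * (inverse (sqrt E) / 2)"

lemma F_deriv: assumes E: "E > 1" shows "(F has_real_derivative dF E) (at E)"
proof -
  have "((\<lambda>E. G (sqrt E)) has_real_derivative dG (sqrt E) * (inverse (sqrt E) / 2)) (at E)"
    by (rule DERIV_chain2[OF G_deriv DERIV_real_sqrt]) (use E in auto)
  then show ?thesis unfolding dF_def
    by (rule has_field_derivative_transform_within_open[where S="{1<..}"]) (use E F_eq_G in auto)
qed

lemma deriv_F: "E > 1 \<Longrightarrow> deriv F E = dF E"
  by (rule DERIV_imp_deriv[OF F_deriv])

lemma dF_neg: "E > 1 \<Longrightarrow> dF E < 0"
  unfolding dF_def by (intro mult_neg_pos dG_neg) auto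

lemma dF_cont: "continuous_on {1<..} dF"
proof -
  have "continuous_on {1<..} (\<lambda>E. dG (sqrt E))"
    by (rule continuous_on_compose2[OF dG_cont]) (auto intro!: continuous_intros)
  then show ?thesis unfolding dF_def by (intro continuous_intros) auto
qed

theorem proposition3p12:
  shows "(\<forall>E>1. F differentiable (at E)) \<and> continuous_on {1<..} (deriv F)
      \<and> (\<forall>E>1. deriv F E < 0)
    \<and> filterlim F at_bot at_top
    \<and> filterlim F at_top (at_right 1) \<and> filterlim F at_top (at_left 1)
    \<and> (\<exists>Ec. Ec > 1 \<and> F Ec = 0 \<and> (\<forall>E>1. F E = 0 \<longrightarrow> E = Ec) \<and> deriv F Ec < 0)
    \<and> (\<forall>E. 0 < E \<and> E < 1 \<longrightarrow> F E > 0)"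
proof -
  have P1: "\<forall>E>1. F differentiable (at E)"
    using F_deriv by (auto simp: has_field_derivative_def intro: differentiableI)
  have P2: "continuous_on {1<..} (deriv F)"
    using dF_cont by (rule continuous_on_cong[OF refl, THEN iffD2, rotated]) (simp add: deriv_F)
  have P3: "\<forall>E>1. deriv F E < 0" using deriv_F dF_neg by simp
  have P4: "filterlim F at_bot at_top"
  proof (rule filterlim_at_bot_mono)
    show "filterlim (\<lambda>E::real. sqrt 2 * pi - 2 * sqrt (sqrt E) * I2) at_bot at_top"
      using I2_pos by real_asymp
    show "\<forall>\<^sub>F E in at_top. F E \<le> sqrt 2 * pi - 2 * sqrt (sqrt E) * I2"
      unfolding eventually_at_top_linorder
    proof (intro exI[of _ 4] allI impI)
      fix E :: real assume E: "E \<ge> 4"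
      then have "sqrt E \<ge> 2" using real_sqrt_le_mono[OF E] by simp
      then show "F E \<le> sqrt 2 * pi - 2 * sqrt (sqrt E) * I2"
        using F_eq_G[of E] G_upper[of "sqrt E"] E by simp
    qed
  qed
  have P5: "filterlim F at_top (at_right 1)"
  proof (rule filterlim_at_top_mono)
    show "filterlim (\<lambda>E::real. sqrt 2 * (ln pi - ln (sqrt (sqrt E - 1))) - sqrt 6 * pi) at_top (at_right 1)"
      by real_asymp
    have "\<forall>\<^sub>F E in at_right 1. E \<in> {1<..<4::real}" by (rule eventually_at_right_real) simp
    then show "\<forall>\<^sub>F E in at_right 1. sqrt 2 * (ln pi - ln (sqrt (sqrt E - 1))) - sqrt 6 * pi \<le> F E"
    proof (rule eventually_mono)
      fix E :: real assume E: "E \<in> {1<..<4}"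
      then have "sqrt E < 2" using real_sqrt_less_mono[of E 4] by simp
      moreover have "sqrt E > 1" using E by simp
      ultimately show "sqrt 2 * (ln pi - ln (sqrt (sqrt E - 1))) - sqrt 6 * pi \<le> F E"
        using F_eq_G[of E] G_lower[of "sqrt E"] E by simp
    qed
  qed
  have P6: "filterlim F at_top (at_left 1)"
  proof (rule filterlim_at_top_mono)
    show "filterlim (\<lambda>E::real. sqrt 2 * (ln pi - ln (sqrt (1 - sqrt E))) - 2 * pi) at_top (at_left 1)"
      by real_asymp
    have "\<forall>\<^sub>F E in at_left 1. E \<in> {0<..<1::real}" by (rule eventually_at_left_real) simp
    then show "\<forall>\<^sub>F E in at_left 1. sqrt 2 * (ln pi - ln (sqrt (1 - sqrt E))) - 2 * pi \<le> F E"
    proof (rule eventually_mono)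
      fix E :: real assume E: "E \<in> {0<..<1}"
      then have "sqrt E < 1" "sqrt E > 0" by auto
      then show "sqrt 2 * (ln pi - ln (sqrt (1 - sqrt E))) - 2 * pi \<le> F E"
        using F_eq_H[of E] H_lower[of "sqrt E"] E by simp
    qed
  qed
  have P8: "\<forall>E. 0 < E \<and> E < 1 \<longrightarrow> F E > 0"
    using F_eq_H H_pos by auto
  have P7: "\<exists>Ec. Ec > 1 \<and> F Ec = 0 \<and> (\<forall>E>1. F E = 0 \<longrightarrow> E = Ec) \<and> deriv F Ec < 0"
  proof -
    have "\<forall>\<^sub>F E in at_right 1. F E > 0" using P5 by (simp add: filterlim_at_top_dense)
    then obtain b where b: "b > 1" "\<And>y. 1 < y \<Longrightarrow> y < b \<Longrightarrow> F y > 0"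
      unfolding eventually_at_right_field by auto
    define E1 where "E1 = (1 + b) / 2"
    have E1: "E1 > 1" "F E1 > 0" using b by (auto simp: E1_def)
    have "\<forall>\<^sub>F E in at_top. F E < 0" using P4 by (simp add: filterlim_at_bot_dense)
    then obtain N where N: "\<And>E. E \<ge> N \<Longrightarrow> F E < 0" unfolding eventually_at_top_linorder by auto
    define E2 where "E2 = max N (E1 + 1)"
    have E2: "E2 > E1" "F E2 < 0" using N by (auto simp: E2_def)
    have cont: "continuous_on {E1..E2} F"
    proof (rule continuous_at_imp_continuous_on, intro ballI)
      fix x assume "x \<in> {E1..E2}"
      then have "x > 1" using E1 by auto
      then show "isCont F x" using F_deriv DERIV_isCont by blast
    qed
    obtain Ec where Ec: "Ec \<ge> E1" "Ec \<le> E2" "F Ec = 0"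
      using IVT2'[of F E2 0 E1, OF _ _ _ cont] E1 E2 by auto
    have Ec1: "Ec > 1" using Ec E1 by simp
    have uniq: "E = Ec" if E: "E > 1" "F E = 0" for E
    proof (rule ccontr)
      assume ne: "E \<noteq> Ec"
      have dec: "F y < F x" if xy: "1 < x" "x < y" for x y
      proof (rule DERIV_neg_imp_decreasing[OF xy(2)])
        fix z assume "x \<le> z" "z \<le> y"
        then have "z > 1" using xy by simp
        then show "\<exists>d. (F has_real_derivative d) (at z) \<and> d < 0" using F_deriv dF_neg by blast
      qed
      show False
      proof (cases "E < Ec")
        case True then show ?thesis using dec[of E Ec] E Ec by simp
      next
        case False then have "Ec < E" using ne by simp
        then show ?thesis using dec[of Ec E] E Ec Ec1 by simp
      qed
    qed
    show ?thesis using Ec Ec1 uniq P3 by blast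
  qed
  show ?thesis using P1 P2 P3 P4 P5 P6 P7 P8 by blast
qed

end
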